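(* Let $G=(V,E)$ be a finite directed graph with a source $s\in V$, a destination $d\in V$ and an integer time budget $T\ge 0$. Each edge $(i,j)\in E$ carries a travel-time probability mass function $p_{ij}$ supported on the positive integers, with minimum travel time $\delta_{ij}=\min\{t: p_{ij}(t)>0\}\ge 1$. Define the optimal-policy on-time arrival probabilities $u_i:\{0,1,\dots,T\}\to[0,1]$ by $u_d(t)=1$ for all $t$, and for $i\neq d$, $$u_{ij}(t)=\sum_{\tau=\delta_{ij}}^{t} u_j(t-\tau)\,p_{ij}(\tau),\qquad u_i(t)=\max_{j:(i,j)\in E} u_{ij}(t),$$ (with the maximum over an empty set equal to $0$). For a directed path $P$ from $s$ to a node $i$, let $q^P$ be the travel-time distribution along $P$ (the convolution of the $p_{e}$ over the edges $e$ of $P$; for the trivial path $[s]$ it is the point mass at $0$), and let $r^P(T)=\sum_{t=0}^{T} q^P(t)\,u_i(T-t)$. Consider the following best-first search: maintain a max-priority queue $Q$ of entries $(r,(q,P))$; initially $Q$ contains $(u_s(T),(\text{point mass at }0,[s]))$. While $Q$ is nonempty, remove an entry $(r,(q,P))$ with maximum key $r$; let $i$ be the last node of $P$; if $i=d$, return $P$; otherwise, for every $j$ with $(i,j)\in E$ and $j\notin P$, insert the entry $\big(\sum_{t=0}^{T}(q\ast p_{ij})(t)\,u_j(T-t),\ (q\ast p_{ij},\ P\,\|\,[j])\big)$, where $\ast$ is convolution and $\|$ is concatenation. If $Q$ becomes empty, return nil. Then this procedure terminates, and if it returns a path $P$, then $P$ is a simple directed path from $s$ to $d$ that maximizes the on-time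 arrival probability $\Pr(\text{travel time along }P\le T)=\sum_{t=0}^{T} q^P(t)$ over all simple directed paths from $s$ to $d$.
   Context: This is the path-based stochastic on-time arrival (SOTA) problem: find a fixed route from $s$ to $d$ maximizing the probability that the total travel time (sum of independent edge travel times) does not exceed the budget $T$. The functions $u_i$ are the on-time arrival probabilities of the optimal adaptive routing policy (where the next edge may depend on the remaining budget), and $r^P(T)$ is the arrival probability obtained by following the fixed path $P$ to its last node $i$ and then following the optimal policy. Time is discretized in integer units. *)

theory Defs
  imports Complex_Main "HOL-Library.Multiset"
begin

text \<open>Travel-time distributions are functions nat \<Rightarrow> real (pmfs on integer times).\<close>

definition conv :: "(nat \<Rightarrow> real) \<Rightarrow> (nat \<Rightarrow> real) \<Rightarrow> nat \<Rightarrow> real" where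
  "conv f g t = (\<Sum>k\<le>t. f k * g (t - k))"

definition point0 :: "nat \<Rightarrow> real" where
  "point0 t = (if t = 0 then 1 else 0)"

definition min_tt :: "('v \<Rightarrow> 'v \<Rightarrow> nat \<Rightarrow> real) \<Rightarrow> 'v \<Rightarrow> 'v \<Rightarrow> nat" where
  "min_tt p i j = (LEAST t. p i j t > 0)"

definition maxz :: "real set \<Rightarrow> real" where
  "maxz S = (if S = {} then 0 else Max S)"

definition u_edge :: "('v \<Rightarrow> 'v \<Rightarrow> nat \<Rightarrow> real) \<Rightarrow> ('v \<Rightarrow> nat \<Rightarrow> real) \<Rightarrow> 'v \<Rightarrow> 'v \<Rightarrow> nat \<Rightarrow> real" where
  "u_edge p u i j t = (\<Sum>\<tau> = min_tt p i j..t. u j (t - \<tau>) * p i j \<tau>)"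

definition is_opt_u :: "'v set \<Rightarrow> ('v \<times> 'v) set \<Rightarrow> ('v \<Rightarrow> 'v \<Rightarrow> nat \<Rightarrow> real) \<Rightarrow> 'v \<Rightarrow> nat
    \<Rightarrow> ('v \<Rightarrow> nat \<Rightarrow> real) \<Rightarrow> bool" where
  "is_opt_u V E p d T u \<longleftrightarrow>
     (\<forall>t\<le>T. u d t = 1 \<and>
        (\<forall>i\<in>V. i \<noteq> d \<longrightarrow> u i t = maxz {u_edge p u i j t | j. (i, j) \<in> E}))"

fun path_dist :: "('v \<Rightarrow> 'v \<Rightarrow> nat \<Rightarrow> real) \<Rightarrow> 'v list \<Rightarrow> nat \<Rightarrow> real" where
  "path_dist p [] = point0"
| "path_dist p [v] = point0"
| "path_dist p (a # b # rest) = conv (p a b) (path_dist p (b # rest))"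

definition r_val :: "nat \<Rightarrow> ('v \<Rightarrow> nat \<Rightarrow> real) \<Rightarrow> 'v \<Rightarrow> (nat \<Rightarrow> real) \<Rightarrow> real" where
  "r_val T u i q = (\<Sum>t\<le>T. q t * u i (T - t))"

definition on_time_prob :: "('v \<Rightarrow> 'v \<Rightarrow> nat \<Rightarrow> real) \<Rightarrow> nat \<Rightarrow> 'v list \<Rightarrow> real" where
  "on_time_prob p T P = (\<Sum>t\<le>T. path_dist p P t)"

definition simple_path :: "('v \<times> 'v) set \<Rightarrow> 'v \<Rightarrow> 'v \<Rightarrow> 'v list \<Rightarrow> bool" where
  "simple_path E s d P \<longleftrightarrow> P \<noteq> [] \<and> hd P = s \<and> last P = d \<and> distinct P \<and>
     (\<forall>k. Suc k < length P \<longrightarrow> (P ! k, P ! Suc k) \<in> E)"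

text \<open>States of the best-first search: running with a queue (multiset of entries (r,(q,P))),
  or returned (Some P / None = nil).\<close>
datatype 'v sstate =
    Run "(real \<times> ((nat \<Rightarrow> real) \<times> 'v list)) multiset"
  | Ret "'v list option"

definition expand_entries :: "('v \<times> 'v) set \<Rightarrow> ('v \<Rightarrow> 'v \<Rightarrow> nat \<Rightarrow> real) \<Rightarrow> ('v \<Rightarrow> nat \<Rightarrow> real)
    \<Rightarrow> nat \<Rightarrow> (nat \<Rightarrow> real) \<Rightarrow> 'v list \<Rightarrow> (real \<times> ((nat \<Rightarrow> real) \<times> 'v list)) multiset" where
  "expand_entries E p u T q P =
     image_mset (\<lambda>j. (r_val T u j (conv q (p (last P) j)), (conv q (p (last P) j), P @ [j])))
       (mset_set {j. (last P, j) \<in> E \<and> j \<notin> set P})"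

text \<open>One step of the search (nondeterministic in tie-breaking among maximal keys).\<close>
inductive search_step :: "('v \<times> 'v) set \<Rightarrow> ('v \<Rightarrow> 'v \<Rightarrow> nat \<Rightarrow> real) \<Rightarrow> ('v \<Rightarrow> nat \<Rightarrow> real)
    \<Rightarrow> nat \<Rightarrow> 'v \<Rightarrow> 'v sstate \<Rightarrow> 'v sstate \<Rightarrow> bool"
  for E p u T d where
  ret: "(r, (q, P)) \<in># Q \<Longrightarrow> (\<forall>e \<in># Q. fst e \<le> r) \<Longrightarrow> last P = d \<Longrightarrow>
        search_step E p u T d (Run Q) (Ret (Some P))"
| expand: "(r, (q, P)) \<in># Q \<Longrightarrow> (\<forall>e \<in># Q. fst e \<le> r) \<Longrightarrow> last P \<noteq> d \<Longrightarrow>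
        search_step E p u T d (Run Q)
          (Run (Q - {#(r, (q, P))#} + expand_entries E p u T q P))"
| empty: "search_step E p u T d (Run {#}) (Ret None)"

definition search_init :: "('v \<Rightarrow> nat \<Rightarrow> real) \<Rightarrow> nat \<Rightarrow> 'v \<Rightarrow> 'v sstate" where
  "search_init u T s = Run {# (u s T, (point0, [s])) #}"

end

theory Submission
  imports Defs "HOL-Computational_Algebra.Formal_Power_Series"
begin

lemma fps_nth_Abs_fps_fun[simp]: "fps_nth (Abs_fps f) = f"
  by (rule ext) simp

lemma conv_fps: "conv f g = fps_nth (Abs_fps f * Abs_fps g)"
  by (auto simp: conv_def fps_mult_nth fun_eq_iff atLeast0AtMost)

lemma conv_assoc: "conv f (conv g h) = conv (conv f g) h"
  by (simp add: conv_fps mult.assoc fps_nth_inverse)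

lemma point0_fps: "point0 = fps_nth 1"
  by (auto simp: point0_def fun_eq_iff)

lemma conv_point0_left: "conv point0 f = f"
  by (simp add: conv_fps point0_fps fps_nth_inverse)

lemma conv_point0_right: "conv f point0 = f"
  by (simp add: conv_fps point0_fps fps_nth_inverse)

lemma cum_conv: "(\<Sum>t\<le>n. conv f g t) = (\<Sum>k\<le>n. f k * (\<Sum>m\<le>n-k. g m))"
proof (induction n)
  case 0 show ?case by (simp add: conv_def)
next
  case (Suc n)
  have "(\<Sum>k\<le>Suc n. f k * (\<Sum>m\<le>Suc n-k. g m)) = (\<Sum>k\<le>n. f k * (\<Sum>m\<le>Suc n-k. g m)) + f (Suc n) * g 0"
    by simp
  also have "(\<Sum>k\<le>n. f k * (\<Sum>m\<le>Suc n-k. g m)) = (\<Sum>k\<le>n. f k * (\<Sum>m\<le>n-k. g m)) + (\<Sum>k\<le>n. f k * g (Suc n - k))"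
  proof -
    have "\<And>k. k \<le> n \<Longrightarrow> f k * (\<Sum>m\<le>Suc n-k. g m) = f k * (\<Sum>m\<le>n-k. g m) + f k * g (Suc n - k)"
      by (simp add: Suc_diff_le distrib_left)
    then show ?thesis by (simp add: sum.distrib)
  qed
  finally show ?case using Suc.IH by (simp add: conv_def)
qed

definition epath :: "('v \<times> 'v) set \<Rightarrow> 'v list \<Rightarrow> bool" where
  "epath E L \<longleftrightarrow> (\<forall>k. Suc k < length L \<longrightarrow> (L ! k, L ! Suc k) \<in> E)"

lemma epath_Cons2: "epath E (a#b#rest) \<longleftrightarrow> (a,b)\<in>E \<and> epath E (b#rest)"
proof
  assume h: "epath E (a#b#rest)"
  have "(a,b)\<in>E" using h[unfolded epath_def, rule_format, of 0] by simp
  moreover have "epath E (b#rest)" unfolding epath_def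
  proof (intro allI impI)
    fix k assume "Suc k < length (b#rest)"
    then show "((b#rest) ! k, (b#rest) ! Suc k) \<in> E"
      using h[unfolded epath_def, rule_format, of "Suc k"] by simp
  qed
  ultimately show "(a,b)\<in>E \<and> epath E (b#rest)" by blast
next
  assume h: "(a,b)\<in>E \<and> epath E (b#rest)"
  show "epath E (a#b#rest)" unfolding epath_def
  proof (intro allI impI)
    fix k assume k: "Suc k < length (a#b#rest)"
    show "((a#b#rest) ! k, (a#b#rest) ! Suc k) \<in> E"
    proof (cases k)
      case 0 then show ?thesis using h by simp
    next
      case (Suc k') then show ?thesis using h k unfolding epath_def by auto
    qed
  qed
qed

lemma epath_suffix: "epath E (xs @ ys) \<Longrightarrow> epath E ys"
  unfolding epath_def
proof (intro allI impI)
  fix k assume h: "\<forall>k. Suc k < length (xs @ ys) \<longrightarrow> ((xs @ ys) ! k, (xs @ ys) ! Suc k) \<in> E"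
    and k: "Suc k < length ys"
  have "((xs @ ys) ! (length xs + k), (xs @ ys) ! Suc (length xs + k)) \<in> E"
    by (rule h[rule_format]) (use k in simp)
  moreover have "(xs @ ys) ! (length xs + k) = ys ! k" by (simp add: nth_append)
  moreover have "(xs @ ys) ! Suc (length xs + k) = ys ! Suc k"
    by (metis add_Suc_right nth_append_length_plus)
  ultimately show "(ys ! k, ys ! Suc k) \<in> E" by simp
qed

lemma epath_prefix: "epath E (xs @ ys) \<Longrightarrow> epath E xs"
  unfolding epath_def
proof (intro allI impI)
  fix k assume h: "\<forall>k. Suc k < length (xs @ ys) \<longrightarrow> ((xs @ ys) ! k, (xs @ ys) ! Suc k) \<in> E"
    and k: "Suc k < length xs"
  then show "(xs ! k, xs ! Suc k) \<in> E"
    using h[rule_format, of k] by (simp add: nth_append)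
qed

lemma epath_snoc: "epath E P \<Longrightarrow> P \<noteq> [] \<Longrightarrow> (last P, j) \<in> E \<Longrightarrow> epath E (P @ [j])"
  unfolding epath_def
proof (intro allI impI)
  fix k assume h: "\<forall>k. Suc k < length P \<longrightarrow> (P ! k, P ! Suc k) \<in> E" and ne: "P \<noteq> []"
    and e: "(last P, j) \<in> E" and k: "Suc k < length (P @ [j])"
  show "((P @ [j]) ! k, (P @ [j]) ! Suc k) \<in> E"
  proof (cases "Suc k < length P")
    case True then show ?thesis using h by (simp add: nth_append)
  next
    case False
    then have "Suc k = length P" using k by simp
    then have "k = length P - 1" by simp
    then show ?thesis using e ne \<open>Suc k = length P\<close> by (simp add: nth_append last_conv_nth)
  qed
qed

lemma pd_app: "P \<noteq> [] \<Longrightarrow> path_dist p (P @ ys) = conv (path_dist p P) (path_dist p (last P # ys))"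
proof (induction P)
  case Nil then show ?case by simp
next
  case (Cons a P)
  show ?case
  proof (cases P)
    case Nil then show ?thesis by (simp add: conv_point0_left)
  next
    case (Cons b rest)
    then show ?thesis using Cons.IH by (simp add: conv_assoc)
  qed
qed

lemma pd_snoc: "P \<noteq> [] \<Longrightarrow> path_dist p (P @ [j]) = conv (path_dist p P) (p (last P) j)"
  using pd_app[of P p "[j]"] by (simp add: conv_point0_right)

lemma conv_nonneg: "(\<And>t. f t \<ge> 0) \<Longrightarrow> (\<And>t. g t \<ge> 0) \<Longrightarrow> conv f g t \<ge> 0"
  unfolding conv_def by (intro sum_nonneg mult_nonneg_nonneg) auto

lemma pd_nonneg:
  assumes "\<And>i j t. (i,j)\<in>E \<Longrightarrow> p i j t \<ge> 0"
  shows "epath E L \<Longrightarrow> path_dist p L t \<ge> 0"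
proof (induction L arbitrary: t)
  case Nil then show ?case by (simp add: point0_def)
next
  case (Cons a L)
  show ?case
  proof (cases L)
    case Nil then show ?thesis by (simp add: point0_def)
  next
    case (Cons b rest)
    then show ?thesis using Cons.IH Cons.prems assms by (auto simp: epath_Cons2 intro!: conv_nonneg)
  qed
qed


context
  fixes V :: "'v set" and E :: "('v \<times> 'v) set" and s d :: 'v and T :: nat
    and p :: "'v \<Rightarrow> 'v \<Rightarrow> nat \<Rightarrow> real" and u :: "'v \<Rightarrow> nat \<Rightarrow> real"
  assumes finV: "finite V" and EV: "E \<subseteq> V \<times> V" and sV: "s \<in> V" and dV: "d \<in> V"
    and pnn: "\<And>i j t. (i, j) \<in> E \<Longrightarrow> p i j t \<ge> 0"
    and opt: "is_opt_u V E p d T u"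
begin

lemma u_d: "t \<le> T \<Longrightarrow> u d t = 1"
  using opt unfolding is_opt_u_def by blast

lemma u_edge_eq:
  assumes "(i,j) \<in> E"
  shows "u_edge p u i j t = (\<Sum>\<tau>\<le>t. p i j \<tau> * u j (t - \<tau>))"
proof -
  have "(\<Sum>\<tau>\<le>t. p i j \<tau> * u j (t - \<tau>)) = (\<Sum>\<tau>\<in>{min_tt p i j..t}. p i j \<tau> * u j (t - \<tau>))"
  proof (rule sum.mono_neutral_right)
    show "\<forall>\<tau>\<in>{..t} - {min_tt p i j..t}. p i j \<tau> * u j (t - \<tau>) = 0"
    proof
      fix \<tau> assume "\<tau> \<in> {..t} - {min_tt p i j..t}"
      then have "\<tau> < min_tt p i j" by auto
      then have "\<not> p i j \<tau> > 0" unfolding min_tt_def by (rule not_less_Least)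
      with pnn[OF assms, of \<tau>] have "p i j \<tau> = 0" by simp
      then show "p i j \<tau> * u j (t - \<tau>) = 0" by simp
    qed
  qed auto
  then show ?thesis unfolding u_edge_def by (simp add: mult.commute)
qed

lemma u_ge_edge:
  assumes "(i,j) \<in> E" "i \<noteq> d" "t \<le> T"
  shows "u_edge p u i j t \<le> u i t"
proof -
  have iV: "i \<in> V" using assms EV by auto
  let ?S = "{u_edge p u i j t | j. (i, j) \<in> E}"
  have ui: "u i t = maxz ?S" using opt assms iV unfolding is_opt_u_def by blast
  have "?S \<subseteq> (\<lambda>j. u_edge p u i j t) ` V" using EV by auto
  then have fin: "finite ?S" by (rule finite_subset[OF _ finite_imageI[OF finV]])
  have mem: "u_edge p u i j t \<in> ?S" using assms by blast
  then have "?S \<noteq> {}" by blast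
  then have "maxz ?S = Max ?S" unfolding maxz_def by (rule if_not_P)
  then have "u i t = Max ?S" using ui by simp
  then show ?thesis using Max_ge[OF fin mem] by simp
qed

lemma bound:
  "L \<noteq> [] \<Longrightarrow> last L = d \<Longrightarrow> distinct L \<Longrightarrow> epath E L \<Longrightarrow> hd L \<in> V \<Longrightarrow> t \<le> T \<Longrightarrow>
    (\<Sum>k\<le>t. path_dist p L k) \<le> u (hd L) t"
proof (induction L arbitrary: t)
  case Nil then show ?case by simp
next
  case (Cons a L)
  show ?case
  proof (cases L)
    case Nil
    then have "a = d" using Cons.prems by simp
    then show ?thesis using Nil Cons.prems u_d by (simp add: point0_def)
  next
    case (Cons b rest)
    note prems = Cons.prems[unfolded Cons]
    have ab: "(a,b) \<in> E" and ep: "epath E (b#rest)" using prems(4) by (auto simp: epath_Cons2)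
    have bV: "b \<in> V" using ab EV by auto
    have ad: "a \<noteq> d"
    proof
      assume "a = d"
      then have "a \<in> set (b#rest)" using prems(2) by (metis last_ConsR last_in_set list.distinct(1))
      then show False using prems(3) by simp
    qed
    have "(\<Sum>k\<le>t. path_dist p (a#b#rest) k) = (\<Sum>\<tau>\<le>t. p a b \<tau> * (\<Sum>m\<le>t-\<tau>. path_dist p (b#rest) m))"
      by (simp add: cum_conv)
    also have "\<dots> \<le> (\<Sum>\<tau>\<le>t. p a b \<tau> * u b (t - \<tau>))"
    proof (rule sum_mono)
      fix \<tau> assume "\<tau> \<in> {..t}"
      have "(\<Sum>m\<le>t-\<tau>. path_dist p (b#rest) m) \<le> u (hd (b#rest)) (t - \<tau>)"
        using Cons.IH[unfolded Cons, of "t - \<tau>"] prems ep bV by auto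
      then show "p a b \<tau> * (\<Sum>m\<le>t-\<tau>. path_dist p (b#rest) m) \<le> p a b \<tau> * u b (t - \<tau>)"
        using pnn[OF ab] by (simp add: mult_left_mono)
    qed
    also have "\<dots> = u_edge p u a b t" using u_edge_eq[OF ab] by simp
    also have "\<dots> \<le> u a t" using u_ge_edge[OF ab ad prems(6)] .
    finally show ?thesis using Cons by simp
  qed
qed

definition good :: "real \<times> ((nat \<Rightarrow> real) \<times> 'v list) \<Rightarrow> bool" where
  "good e \<longleftrightarrow> (case e of (r,(q,P)) \<Rightarrow> P \<noteq> [] \<and> hd P = s \<and> distinct P \<and> set P \<subseteq> V \<and> epath E P
      \<and> q = path_dist p P \<and> r = r_val T u (last P) q)"

definition optimal :: "'v list \<Rightarrow> bool" where
  "optimal P \<longleftrightarrow> simple_path E s d P \<and>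
           (\<forall>P'. simple_path E s d P' \<longrightarrow> on_time_prob p T P' \<le> on_time_prob p T P)"

fun Inv :: "'v sstate \<Rightarrow> bool" where
  "Inv (Run Q) = ((\<forall>e\<in>#Q. good e) \<and>
      (\<forall>P'. simple_path E s d P' \<longrightarrow> (\<exists>e\<in>#Q. \<exists>rest. snd (snd e) @ rest = P')))"
| "Inv (Ret None) = True"
| "Inv (Ret (Some P)) = optimal P"

lemma simple_epath: "simple_path E s d P \<longleftrightarrow> P \<noteq> [] \<and> hd P = s \<and> last P = d \<and> distinct P \<and> epath E P"
  unfolding simple_path_def epath_def by blast

lemma prefix_bound:
  assumes g: "good (r', (q', P0))" and sp: "simple_path E s d (P0 @ rest)"
  shows "on_time_prob p T (P0 @ rest) \<le> r'"
proof -
  have P0: "P0 \<noteq> []" "set P0 \<subseteq> V" and q': "q' = path_dist p P0"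
    and r': "r' = r_val T u (last P0) q'" using g unfolding good_def by auto
  have sp': "last (P0 @ rest) = d" "distinct (P0 @ rest)" "epath E (P0 @ rest)"
    using sp by (auto simp: simple_epath)
  let ?L = "last P0 # rest"
  have lastL: "last ?L = d" using sp'(1) P0(1) by (cases rest) auto
  have split: "P0 @ rest = butlast P0 @ ?L" using P0(1) by simp
  have "distinct (butlast P0 @ ?L)" unfolding split[symmetric] by (rule sp'(2))
  then have distL: "distinct ?L" by (simp only: distinct_append)
  have "epath E (butlast P0 @ ?L)" unfolding split[symmetric] by (rule sp'(3))
  then have epL: "epath E ?L" by (rule epath_suffix)
  have hdL: "hd ?L \<in> V" using P0 by auto
  have "on_time_prob p T (P0 @ rest) = (\<Sum>t\<le>T. conv (path_dist p P0) (path_dist p ?L) t)"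
    by (simp only: on_time_prob_def pd_app[OF P0(1)])
  also have "\<dots> = (\<Sum>k\<le>T. path_dist p P0 k * (\<Sum>m\<le>T-k. path_dist p ?L m))"
    by (rule cum_conv)
  also have "\<dots> \<le> (\<Sum>k\<le>T. path_dist p P0 k * u (last P0) (T - k))"
  proof (rule sum_mono)
    fix k assume "k \<in> {..T}"
    have "(\<Sum>m\<le>T-k. path_dist p ?L m) \<le> u (hd ?L) (T - k)"
      using \<open>k \<in> {..T}\<close> by (intro bound[OF _ lastL distL epL hdL]) auto
    moreover have "path_dist p P0 k \<ge> 0" by (rule pd_nonneg[OF pnn epath_prefix[OF sp'(3)]])
    ultimately show "path_dist p P0 k * (\<Sum>m\<le>T-k. path_dist p ?L m) \<le> path_dist p P0 k * u (last P0) (T - k)"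
      by (simp add: mult_left_mono)
  qed
  also have "\<dots> = r'" using r' q' by (simp add: r_val_def)
  finally show ?thesis .
qed

lemma expand_mem:
  "e \<in># expand_entries E p u T q P \<longleftrightarrow>
    (\<exists>j. (last P, j) \<in> E \<and> j \<notin> set P \<and>
       e = (r_val T u j (conv q (p (last P) j)), (conv q (p (last P) j), P @ [j])))"
proof -
  have "{j. (last P, j) \<in> E \<and> j \<notin> set P} \<subseteq> V" using EV by auto
  then have "finite {j. (last P, j) \<in> E \<and> j \<notin> set P}" using finV finite_subset by blast
  then have "set_mset (mset_set {j. (last P, j) \<in> E \<and> j \<notin> set P}) = {j. (last P, j) \<in> E \<and> j \<notin> set P}"
    by simp
  then show ?thesis unfolding expand_entries_def in_image_mset by blast
qed

lemma Inv_init: "Inv (search_init u T s)"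
proof -
  have "good (u s T, (point0, [s]))"
    unfolding good_def using sV by (auto simp: epath_def r_val_def point0_def
      sum.atMost_shift if_distrib cong: if_cong)
  moreover have "\<exists>rest. [s] @ rest = P'" if "simple_path E s d P'" for P'
    using that unfolding simple_path_def by (metis append_Cons append_Nil list.exhaust_sel)
  ultimately show ?thesis unfolding search_init_def by auto
qed

lemma Inv_step: "search_step E p u T d S S' \<Longrightarrow> Inv S \<Longrightarrow> Inv S'"
proof (induction rule: search_step.induct)
  case (ret r q P Q)
  have g: "good (r,(q,P))" using ret by auto
  then have sp: "simple_path E s d P" using ret(3) unfolding good_def by (auto simp: simple_epath)
  have rP: "r = on_time_prob p T P" using g ret(3) u_d
    unfolding good_def r_val_def on_time_prob_def by auto
  have "on_time_prob p T P' \<le> on_time_prob p T P" if sp': "simple_path E s d P'" for P'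
  proof -
    obtain e rest where e: "e \<in># Q" "snd (snd e) @ rest = P'" using ret(4) sp' by auto
    obtain r' q' P0 where e': "e = (r', (q', P0))" by (metis prod.exhaust)
    have "on_time_prob p T P' \<le> r'"
      using prefix_bound[of r' q' P0 rest] e e' ret(4) sp' by auto
    also have "r' \<le> r" using ret(2) e e' by force
    finally show ?thesis using rP by simp
  qed
  then show ?case using sp by (simp add: optimal_def)
next
  case (expand r q P Q)
  have g: "good (r,(q,P))" using expand by auto
  have P: "P \<noteq> []" "hd P = s" "distinct P" "set P \<subseteq> V" "epath E P" "q = path_dist p P"
    using g unfolding good_def by auto
  have goodN: "good e" if eN: "e \<in># expand_entries E p u T q P" for e
  proof -
    obtain j where j: "(last P, j) \<in> E" "j \<notin> set P"
      "e = (r_val T u j (conv q (p (last P) j)), (conv q (p (last P) j), P @ [j]))"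
      using eN[unfolded expand_mem] by blast
    have "j \<in> V" using j EV by auto
    then show ?thesis using j P pd_snoc[OF P(1), of p j] epath_snoc[OF P(5) P(1) j(1)]
      unfolding good_def by auto
  qed
  have goodQ: "good e" if "e \<in># Q - {#(r,(q,P))#}" for e
    using that expand(4) by (auto dest: in_diffD)
  have pref: "\<exists>e\<in># Q - {#(r, q, P)#} + expand_entries E p u T q P. \<exists>rest. snd (snd e) @ rest = P'"
    if sp': "simple_path E s d P'" for P'
  proof -
    obtain e rest where e: "e \<in># Q" "snd (snd e) @ rest = P'" using expand(4) sp' by auto
    show ?thesis
    proof (cases "e = (r,(q,P))")
      case False
      then have "e \<in># Q - {#(r,(q,P))#}" using e(1) by (simp add: in_diff_count)
      then show ?thesis using e(2) by auto
    next
      case True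
      then have PP: "P @ rest = P'" using e by simp
      have "rest \<noteq> []" using PP sp' expand(3) unfolding simple_path_def by auto
      then obtain j rest' where rj: "rest = j # rest'" by (cases rest) auto
      have dP': "distinct P'" and epP': "epath E P'" using sp' by (auto simp: simple_epath)
      have jn: "j \<notin> set P" using dP' PP rj by auto
      have "epath E (P @ [j])" using epP' PP rj epath_prefix[of E "P @ [j]" rest'] by simp
      moreover have "Suc (length P - 1) < length (P @ [j])" using P(1) by simp
      ultimately have "((P @ [j]) ! (length P - 1), (P @ [j]) ! Suc (length P - 1)) \<in> E"
        unfolding epath_def by blast
      moreover have "(P @ [j]) ! (length P - 1) = last P" using P(1)
        by (simp add: nth_append last_conv_nth)
      moreover have "(P @ [j]) ! Suc (length P - 1) = j" using P(1) by simp
      ultimately have "(last P, j) \<in> E" by simp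
      then have "(r_val T u j (conv q (p (last P) j)), (conv q (p (last P) j), P @ [j]))
          \<in># expand_entries E p u T q P" using jn expand_mem by blast
      moreover have "(P @ [j]) @ rest' = P'" using PP rj by simp
      ultimately show ?thesis by (metis (no_types) snd_conv union_iff)
    qed
  qed
  have "\<forall>e\<in>#Q - {#(r, q, P)#} + expand_entries E p u T q P. good e"
    using goodN goodQ by (metis union_iff)
  then show ?case using pref by (simp only: Inv.simps) blast
next
  case empty then show ?case by simp
qed

lemma Inv_reach: "(search_step E p u T d)\<^sup>*\<^sup>* (search_init u T s) S \<Longrightarrow> Inv S"
proof (induction rule: rtranclp_induct)
  case base show ?case by (rule Inv_init)
next
  case (step y z) show ?case by (rule Inv_step[OF step(2) step(3)])
qed

lemma reach_opt:
  "(search_step E p u T d)\<^sup>*\<^sup>* (search_init u T s) (Ret (Some P)) \<Longrightarrow>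
     simple_path E s d P \<and>
     (\<forall>P'. simple_path E s d P' \<longrightarrow> on_time_prob p T P' \<le> on_time_prob p T P)"
  using Inv_reach[of "Ret (Some P)"] by (simp add: optimal_def)

lemma progress:
  "(\<exists>R. S = Ret R) \<or> (\<exists>S'. search_step E p u T d S S')"
proof (cases S)
  case (Ret R) then show ?thesis by blast
next
  case (Run Q)
  show ?thesis
  proof (cases "Q = {#}")
    case True then show ?thesis using Run search_step.empty[of E p u T d] by blast
  next
    case False
    let ?M = "fst ` set_mset Q"
    have fin: "finite ?M" by simp
    have ne: "?M \<noteq> {}" using False by simp
    have "Max ?M \<in> ?M" using Max_in[OF fin ne] .
    then obtain x where x: "x \<in># Q" "fst x = Max ?M" by auto
    obtain r q P where xr: "x = (r,(q,P))" by (metis prod.exhaust)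
    have mx: "\<forall>e\<in>#Q. fst e \<le> r"
    proof
      fix e assume "e \<in># Q"
      then have "fst e \<in> ?M" by simp
      then have "fst e \<le> Max ?M" using Max_ge[OF fin] by blast
      then show "fst e \<le> r" using x xr by simp
    qed
    have xQ: "(r,(q,P)) \<in># Q" using x xr by simp
    show ?thesis
    proof (cases "last P = d")
      case True then show ?thesis using search_step.ret[OF xQ mx True] Run by blast
    next
      case False then show ?thesis using search_step.expand[OF xQ mx False] Run by blast
    qed
  qed
qed

lemma no_inf: "\<not> (\<exists>f. f 0 = search_init u T s \<and> (\<forall>n. search_step E p u T d (f n) (f (Suc n))))"
proof
  assume "\<exists>f. f 0 = search_init u T s \<and> (\<forall>n. search_step E p u T d (f n) (f (Suc n)))"
  then obtain f where f0: "f 0 = search_init u T s"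
    and fs: "\<And>n. search_step E p u T d (f n) (f (Suc n))" by blast
  have reach: "(search_step E p u T d)\<^sup>*\<^sup>* (search_init u T s) (f n)" for n
  proof (induction n)
    case 0 then show ?case using f0 by simp
  next
    case (Suc n) then show ?case using fs[of n] by (rule rtranclp.rtrancl_into_rtrancl)
  qed
  define \<mu> :: "(real \<times> ((nat \<Rightarrow> real) \<times> 'v list)) multiset \<Rightarrow> nat multiset"
    where "\<mu> Q = image_mset (\<lambda>e. Suc (card V) - length (snd (snd e))) Q" for Q
  define g where "g n = (case f n of Run Q \<Rightarrow> \<mu> Q | Ret _ \<Rightarrow> {#})" for n
  have isRun: "\<exists>Q. f n = Run Q" for n
    using fs[of n] by (cases rule: search_step.cases) auto
  have lenb: "length P \<le> card V" if "good (r,(q,P))" for r q P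
  proof -
    have "distinct P" "set P \<subseteq> V" using that unfolding good_def by auto
    then show ?thesis using card_mono[OF finV] distinct_card by metis
  qed
  have dec: "(g (Suc n), g n) \<in> mult less_than" for n
  proof -
    obtain Q where Q: "f n = Run Q" using isRun by blast
    obtain Q' where Q': "f (Suc n) = Run Q'" using isRun by blast
    have st: "search_step E p u T d (Run Q) (Run Q')" using fs[of n] Q Q' by simp
    then obtain r q P where xQ: "(r,(q,P)) \<in># Q" and ld: "last P \<noteq> d"
      and QQ: "Q' = Q - {#(r,(q,P))#} + expand_entries E p u T q P"
      by (cases rule: search_step.cases) auto
    have inv: "Inv (Run Q)" using Inv_reach[OF reach[of n]] Q by simp
    then have gx: "good (r,(q,P))" using xQ by simp
    let ?m = "Suc (card V) - length P"
    have "\<forall>k\<in>set_mset (\<mu> (expand_entries E p u T q P)). (k, ?m) \<in> less_than"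
    proof
      fix k assume "k \<in> set_mset (\<mu> (expand_entries E p u T q P))"
      then obtain e where e: "e \<in># expand_entries E p u T q P" and k: "k = Suc (card V) - length (snd (snd e))"
        unfolding \<mu>_def by auto
      obtain j where j: "(last P, j) \<in> E" "j \<notin> set P"
        "e = (r_val T u j (conv q (p (last P) j)), (conv q (p (last P) j), P @ [j]))"
        using e[unfolded expand_mem] by blast
      have "j \<in> V" using j EV by auto
      then have "set (P @ [j]) \<subseteq> V" "distinct (P @ [j])" using gx j unfolding good_def by auto
      then have "length (P @ [j]) \<le> card V" using card_mono[OF finV] distinct_card by metis
      then show "(k, ?m) \<in> less_than" using k j by simp
    qed
    then have "(\<mu> (Q - {#(r,(q,P))#}) + \<mu> (expand_entries E p u T q P), \<mu> (Q - {#(r,(q,P))#}) + {#?m#}) \<in> mult less_than"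
      by (intro one_step_implies_mult) auto
    moreover have "\<mu> Q = \<mu> (Q - {#(r,(q,P))#}) + {#?m#}"
    proof -
      have "Q = add_mset (r,(q,P)) (Q - {#(r,(q,P))#})" using xQ by simp
      then have "\<mu> Q = \<mu> (add_mset (r,(q,P)) (Q - {#(r,(q,P))#}))" by simp
      then show ?thesis unfolding \<mu>_def by simp
    qed
    moreover have "\<mu> Q' = \<mu> (Q - {#(r,(q,P))#}) + \<mu> (expand_entries E p u T q P)"
      unfolding QQ \<mu>_def by simp
    ultimately show ?thesis unfolding g_def using Q Q' by simp
  qed
  have "wf (mult less_than)" by (rule wf_mult[OF wf_less_than])
  then show False using dec unfolding wf_iff_no_infinite_down_chain by blast
qed

end

theorem mainTheorem1:
  fixes V :: "'v set" and E :: "('v \<times> 'v) set" and s d :: 'v and T :: nat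
    and p :: "'v \<Rightarrow> 'v \<Rightarrow> nat \<Rightarrow> real" and u :: "'v \<Rightarrow> nat \<Rightarrow> real"
  assumes "finite V" and "E \<subseteq> V \<times> V" and "s \<in> V" and "d \<in> V"
    and "\<And>i j t. (i, j) \<in> E \<Longrightarrow> p i j t \<ge> 0"
    and "\<And>i j. (i, j) \<in> E \<Longrightarrow> p i j 0 = 0"
    and "\<And>i j. (i, j) \<in> E \<Longrightarrow> p i j sums 1"
    and "is_opt_u V E p d T u"
  shows "(\<not> (\<exists>f. f 0 = search_init u T s \<and> (\<forall>n. search_step E p u T d (f n) (f (Suc n))))) \<and>
    (\<forall>S. (search_step E p u T d)\<^sup>*\<^sup>* (search_init u T s) S \<longrightarrow>
           (\<exists>R. S = Ret R) \<or> (\<exists>S'. search_step E p u T d S S')) \<and>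
    (\<forall>P. (search_step E p u T d)\<^sup>*\<^sup>* (search_init u T s) (Ret (Some P)) \<longrightarrow>
           simple_path E s d P \<and>
           (\<forall>P'. simple_path E s d P' \<longrightarrow> on_time_prob p T P' \<le> on_time_prob p T P))"
  using no_inf[OF assms(1-5,8)] progress[OF assms(1-5,8)] reach_opt[OF assms(1-5,8)] by blast

end
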